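(* Fix $k\ge2$, $c>0$ and $\zeta\in(0,1]$ with $\zeta(k-1)c^{k-1}<e$. Let $G=(V,E)$ be a finite $k$-uniform hypergraph with maximum degree at most $\Delta$ and let $F=F^G_{c,\zeta}$ (defined with this parameter $\Delta$). Then for all $\mathbf x,\mathbf y\in\mathbb R_{>0}^V$, $$\|\log F^2(\mathbf x)-\log F^2(\mathbf y)\|_\infty\le(1-\delta)\|\log\mathbf x-\log\mathbf y\|_\infty,\qquad \delta=1-\zeta c^{k-1}(k-1)e^{-1},$$ where $F^2=F\circ F$ and $\log$ is applied coordinatewise. In particular $F$ has a unique fixed point.
   Context: $F^G_{c,\zeta}:\mathbb R^V_{>0}\to\mathbb R^V_{>0}$ is given by $(F^G_{c,\zeta}(\mathbf x))_v=c\exp\left(-\frac{\zeta}{\Delta}\sum_{e\ni v}\prod_{u\in e\setminus\{v\}}x_u\right)$. *)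

theory Defs
  imports "HOL-Analysis.Analysis"
begin

definition uniform_hypergraph :: "nat \<Rightarrow> 'a set \<Rightarrow> 'a set set \<Rightarrow> bool" where
  "uniform_hypergraph k V E \<longleftrightarrow> finite V \<and> (\<forall>e\<in>E. e \<subseteq> V \<and> card e = k)"

definition hdeg :: "'a set set \<Rightarrow> 'a \<Rightarrow> nat" where
  "hdeg E v = card {e\<in>E. v \<in> e}"

definition posvec :: "'a set \<Rightarrow> ('a \<Rightarrow> real) set" where
  "posvec V = {x. x \<in> extensional V \<and> (\<forall>v\<in>V. x v > 0)}"

definition Fmap :: "'a set \<Rightarrow> 'a set set \<Rightarrow> real \<Rightarrow> real \<Rightarrow> nat \<Rightarrow> ('a \<Rightarrow> real) \<Rightarrow> ('a \<Rightarrow> real)" where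
  "Fmap V E c \<zeta> \<Delta> x = restrict (\<lambda>v. c * exp (- (\<zeta> / real \<Delta>) *
       (\<Sum>e\<in>{e\<in>E. v \<in> e}. \<Prod>u\<in>e - {v}. x u))) V"

definition supnorm :: "'a set \<Rightarrow> ('a \<Rightarrow> real) \<Rightarrow> real" where
  "supnorm V f = Max (insert 0 ((\<lambda>v. \<bar>f v\<bar>) ` V))"

end

theory Submission
  imports Defs
begin

lemma texp_le: fixes t :: real shows "t * exp (-t) \<le> exp (-1)"
proof -
  have "t \<le> exp (t - 1)" using exp_ge_add_one_self[of "t - 1"] by simp
  hence "t * exp (-t) \<le> exp (t - 1) * exp (-t)" by (simp add: mult_right_mono)
  also have "\<dots> = exp (-1)" by (simp add: exp_add[symmetric])
  finally show ?thesis .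
qed

lemma expdiff1:
  fixes A B M :: real
  assumes "0 \<le> A" "A \<le> B" "B \<le> A * exp M" "0 \<le> M"
  shows "exp (-A) - exp (-B) \<le> M * exp (-1)"
proof (cases "A = 0")
  case True
  then have "B = 0" using assms by simp
  then show ?thesis using True assms by simp
next
  case False
  hence Ap: "A > 0" using assms by simp
  define s where "s = ln (B / A)"
  have Bp: "B > 0" using Ap assms by simp
  have Bs: "B = A * exp s" using Ap Bp by (simp add: s_def)
  have s0: "0 \<le> s" using Ap assms by (simp add: s_def)
  have sM: "s \<le> M"
  proof -
    have "B / A \<le> exp M" using assms Ap by (simp add: divide_simps mult.commute)
    thus ?thesis unfolding s_def using Ap Bp by (metis divide_pos_pos exp_gt_zero ln_exp ln_le_cancel_iff)
  qed
  show ?thesis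
  proof (cases "s = 0")
    case True then show ?thesis using Bs assms by simp
  next
    case False
    hence "0 < s" using s0 by simp
    have "\<exists>z. 0 < z \<and> z < s \<and> exp (- (A * exp s)) - exp (- (A * exp 0)) = (s - 0) * (exp (- (A * exp z)) * (- (A * exp z)))"
      by (rule MVT2[OF \<open>0 < s\<close>]) (auto intro!: derivative_eq_intros)
    then obtain z where z: "exp (- (A * exp s)) - exp (- (A * exp 0)) = (s - 0) * (exp (- (A * exp z)) * (- (A * exp z)))"
      by blast
    have "exp (-A) - exp (-B) = s * ((A * exp z) * exp (- (A * exp z)))"
      using z Bs by (simp add: algebra_simps)
    also have "\<dots> \<le> s * exp (-1)" using texp_le s0 by (simp add: mult_left_mono)
    also have "\<dots> \<le> M * exp (-1)" using sM by (simp add: mult_right_mono)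
    finally show ?thesis .
  qed
qed

lemma expdiff:
  fixes A B M :: real
  assumes "0 \<le> A" "0 \<le> B" "B \<le> A * exp M" "A \<le> B * exp M" "0 \<le> M"
  shows "\<bar>exp (-A) - exp (-B)\<bar> \<le> M * exp (-1)"
proof (cases "A \<le> B")
  case True
  then show ?thesis using expdiff1[of A B M] assms by simp
next
  case False
  then show ?thesis using expdiff1[of B A M] assms by simp
qed


definition Ssum :: "'a set set \<Rightarrow> ('a \<Rightarrow> real) \<Rightarrow> 'a \<Rightarrow> real" where
  "Ssum E x v = (\<Sum>e\<in>{e\<in>E. v \<in> e}. \<Prod>u\<in>e - {v}. x u)"

lemma Fmap_Ssum: "Fmap V E c \<zeta> \<Delta> x = restrict (\<lambda>v. c * exp (- (\<zeta> / real \<Delta>) * Ssum E x v)) V"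
  unfolding Fmap_def Ssum_def by simp

context
  fixes k \<Delta> :: nat and c \<zeta> :: real and V :: "'a set" and E :: "'a set set"
  assumes k2: "k \<ge> 2" and cpos: "c > 0" and zpos: "0 < \<zeta>"
    and uh: "uniform_hypergraph k V E"
    and deg: "\<forall>v\<in>V. hdeg E v \<le> \<Delta>"
begin

lemma finV: "finite V" using uh by (simp add: uniform_hypergraph_def)
lemma eV: "e \<in> E \<Longrightarrow> e \<subseteq> V" using uh by (simp add: uniform_hypergraph_def)
lemma ecard: "e \<in> E \<Longrightarrow> card e = k" using uh by (simp add: uniform_hypergraph_def)
lemma efin: "e \<in> E \<Longrightarrow> finite e" using eV finV finite_subset by blast
lemma Efin: "finite {e\<in>E. v \<in> e}"
proof -
  have "{e\<in>E. v \<in> e} \<subseteq> Pow V" using eV by blast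
  thus ?thesis using finV by (meson finite_Pow_iff finite_subset)
qed
lemma ecard1: "e \<in> E \<Longrightarrow> v \<in> e \<Longrightarrow> card (e - {v}) = k - 1"
  using ecard efin by (simp add: card_Diff_singleton)

lemma Ssum_cong: "(\<And>u. u \<in> V \<Longrightarrow> x u = y u) \<Longrightarrow> Ssum E x v = Ssum E y v"
  unfolding Ssum_def
  by (intro sum.cong refl prod.cong) (use eV in auto)

lemma Fcong: "(\<And>u. u \<in> V \<Longrightarrow> x u = y u) \<Longrightarrow> Fmap V E c \<zeta> \<Delta> x = Fmap V E c \<zeta> \<Delta> y"
  unfolding Fmap_Ssum using Ssum_cong by (metis (no_types, lifting))

lemma Fval: "v \<in> V \<Longrightarrow> Fmap V E c \<zeta> \<Delta> x v = c * exp (- (\<zeta> / real \<Delta>) * Ssum E x v)"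
  unfolding Fmap_Ssum by simp

lemma Fpos: "v \<in> V \<Longrightarrow> Fmap V E c \<zeta> \<Delta> x v > 0"
  using Fval cpos by simp

lemma lnF: "v \<in> V \<Longrightarrow> ln (Fmap V E c \<zeta> \<Delta> x v) = ln c - (\<zeta> / real \<Delta>) * Ssum E x v"
  using Fval cpos by (simp add: ln_mult)

lemma Ssum_nonneg: "(\<And>u. u \<in> V \<Longrightarrow> x u > 0) \<Longrightarrow> Ssum E x v \<ge> 0"
  unfolding Ssum_def
  by (intro sum_nonneg prod_nonneg) (use eV in \<open>auto intro: less_imp_le\<close>)

lemma prod_le:
  assumes "e \<in> E" "v \<in> e"
    and hx: "\<And>u. u \<in> V \<Longrightarrow> x u > 0" and hy: "\<And>u. u \<in> V \<Longrightarrow> y u > 0"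
    and hL: "\<And>u. u \<in> V \<Longrightarrow> ln (x u) - ln (y u) \<le> L"
  shows "(\<Prod>u\<in>e - {v}. x u) \<le> (\<Prod>u\<in>e - {v}. y u) * exp (real (k - 1) * L)"
proof -
  have sub: "e - {v} \<subseteq> V" using eV assms(1) by blast
  have "(\<Prod>u\<in>e - {v}. x u) \<le> (\<Prod>u\<in>e - {v}. y u * exp L)"
  proof (rule prod_mono)
    fix u assume "u \<in> e - {v}"
    hence u: "u \<in> V" using sub by blast
    have "x u = exp (ln (x u))" using hx[OF u] by simp
    also have "\<dots> \<le> exp (ln (y u) + L)" using hL[OF u] by simp
    also have "\<dots> = y u * exp L" using hy[OF u] by (simp add: exp_add)
    finally show "0 \<le> x u \<and> x u \<le> y u * exp L" using hx[OF u] by simp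
  qed
  also have "\<dots> = (\<Prod>u\<in>e - {v}. y u) * exp L ^ (k - 1)"
    using ecard1[OF assms(1,2)] by (simp add: prod.distrib)
  also have "\<dots> = (\<Prod>u\<in>e - {v}. y u) * exp (real (k - 1) * L)"
    by (simp add: exp_of_nat_mult)
  finally show ?thesis .
qed

lemma Ssum_le:
  assumes hx: "\<And>u. u \<in> V \<Longrightarrow> x u > 0" and hy: "\<And>u. u \<in> V \<Longrightarrow> y u > 0"
    and hL: "\<And>u. u \<in> V \<Longrightarrow> ln (x u) - ln (y u) \<le> L"
  shows "Ssum E x v \<le> Ssum E y v * exp (real (k - 1) * L)"
  unfolding Ssum_def sum_distrib_right
  by (rule sum_mono) (use prod_le[OF _ _ hx hy hL] in auto)

lemma prodF:
  assumes "e \<in> E" "v \<in> e"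
  shows "(\<Prod>u\<in>e - {v}. Fmap V E c \<zeta> \<Delta> x u)
     = c ^ (k - 1) * exp (- ((\<zeta> / real \<Delta>) * (\<Sum>u\<in>e - {v}. Ssum E x u)))"
proof -
  have sub: "e - {v} \<subseteq> V" using eV assms(1) by blast
  have "(\<Prod>u\<in>e - {v}. Fmap V E c \<zeta> \<Delta> x u) = (\<Prod>u\<in>e - {v}. c * exp (- (\<zeta> / real \<Delta>) * Ssum E x u))"
    by (rule prod.cong) (use sub Fval in auto)
  also have "\<dots> = c ^ (k - 1) * (\<Prod>u\<in>e - {v}. exp (- (\<zeta> / real \<Delta>) * Ssum E x u))"
    using ecard1[OF assms] by (simp add: prod.distrib)
  also have "(\<Prod>u\<in>e - {v}. exp (- (\<zeta> / real \<Delta>) * Ssum E x u)) = exp (\<Sum>u\<in>e - {v}. - (\<zeta> / real \<Delta>) * Ssum E x u)"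
    using efin[OF assms(1)] by (simp add: exp_sum)
  also have "(\<Sum>u\<in>e - {v}. - (\<zeta> / real \<Delta>) * Ssum E x u) = - ((\<zeta> / real \<Delta>) * (\<Sum>u\<in>e - {v}. Ssum E x u))"
    by (simp add: sum_distrib_left sum_negf)
  finally show ?thesis .
qed


lemma main_vertex:
  assumes hx: "\<And>u. u \<in> V \<Longrightarrow> x u > 0" and hy: "\<And>u. u \<in> V \<Longrightarrow> y u > 0"
    and hL: "\<And>u. u \<in> V \<Longrightarrow> \<bar>ln (x u) - ln (y u)\<bar> \<le> L" and L0: "0 \<le> L"
    and v: "v \<in> V"
  shows "\<bar>ln (Fmap V E c \<zeta> \<Delta> (Fmap V E c \<zeta> \<Delta> x) v) - ln (Fmap V E c \<zeta> \<Delta> (Fmap V E c \<zeta> \<Delta> y) v)\<bar>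
         \<le> \<zeta> * c ^ (k - 1) * real (k - 1) * exp (-1) * L"
proof -
  let ?F = "Fmap V E c \<zeta> \<Delta>"
  define a where "a = \<zeta> / real \<Delta>"
  define K where "K = c ^ (k - 1) * (real (k - 1) * L * exp (-1))"
  have a0: "0 \<le> a" using zpos by (simp add: a_def)
  have K0: "0 \<le> K" using cpos L0 by (simp add: K_def)
  have hL1: "\<And>u. u \<in> V \<Longrightarrow> ln (x u) - ln (y u) \<le> L" using hL by (simp add: abs_le_iff)
  have hL2: "\<And>u. u \<in> V \<Longrightarrow> ln (y u) - ln (x u) \<le> L" using hL by (simp add: abs_le_iff)
  have edge: "\<bar>(\<Prod>u\<in>e - {v}. ?F x u) - (\<Prod>u\<in>e - {v}. ?F y u)\<bar> \<le> K"
    if e: "e \<in> E" "v \<in> e" for e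
  proof -
    define A where "A = a * (\<Sum>u\<in>e - {v}. Ssum E x u)"
    define B where "B = a * (\<Sum>u\<in>e - {v}. Ssum E y u)"
    have A0: "0 \<le> A" unfolding A_def using a0 Ssum_nonneg[OF hx] by (simp add: sum_nonneg)
    have B0: "0 \<le> B" unfolding B_def using a0 Ssum_nonneg[OF hy] by (simp add: sum_nonneg)
    have AB: "A \<le> B * exp (real (k - 1) * L)"
      unfolding A_def B_def mult.assoc sum_distrib_right
      by (rule mult_left_mono[OF sum_mono a0]) (rule Ssum_le[OF hx hy hL1])
    have BA: "B \<le> A * exp (real (k - 1) * L)"
      unfolding A_def B_def mult.assoc sum_distrib_right
      by (rule mult_left_mono[OF sum_mono a0]) (rule Ssum_le[OF hy hx hL2])
    have "\<bar>exp (-A) - exp (-B)\<bar> \<le> real (k - 1) * L * exp (-1)"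
      by (rule expdiff[OF A0 B0 BA AB]) (use L0 in simp)
    moreover have "(\<Prod>u\<in>e - {v}. ?F x u) - (\<Prod>u\<in>e - {v}. ?F y u) = c ^ (k - 1) * (exp (-A) - exp (-B))"
      unfolding prodF[OF e] A_def B_def a_def by (simp add: algebra_simps)
    ultimately show ?thesis unfolding K_def using cpos
      by (simp add: abs_mult mult_left_mono)
  qed
  have "ln (?F (?F x) v) - ln (?F (?F y) v) = a * (Ssum E (?F y) v - Ssum E (?F x) v)"
    using lnF[OF v] by (simp add: a_def algebra_simps)
  also have "Ssum E (?F y) v - Ssum E (?F x) v
      = (\<Sum>e\<in>{e\<in>E. v \<in> e}. (\<Prod>u\<in>e - {v}. ?F y u) - (\<Prod>u\<in>e - {v}. ?F x u))"
    unfolding Ssum_def by (simp add: sum_subtractf)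
  finally have eq: "\<bar>ln (?F (?F x) v) - ln (?F (?F y) v)\<bar>
      = a * \<bar>\<Sum>e\<in>{e\<in>E. v \<in> e}. (\<Prod>u\<in>e - {v}. ?F y u) - (\<Prod>u\<in>e - {v}. ?F x u)\<bar>"
    using a0 by (simp add: abs_mult)
  have "\<bar>\<Sum>e\<in>{e\<in>E. v \<in> e}. (\<Prod>u\<in>e - {v}. ?F y u) - (\<Prod>u\<in>e - {v}. ?F x u)\<bar>
      \<le> (\<Sum>e\<in>{e\<in>E. v \<in> e}. K)"
    by (rule order_trans[OF sum_abs sum_mono]) (use edge in \<open>auto simp: abs_minus_commute\<close>)
  also have "\<dots> = real (hdeg E v) * K" by (simp add: hdeg_def)
  finally have s: "\<bar>\<Sum>e\<in>{e\<in>E. v \<in> e}. (\<Prod>u\<in>e - {v}. ?F y u) - (\<Prod>u\<in>e - {v}. ?F x u)\<bar> \<le> real (hdeg E v) * K" .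
  have aD: "a * real (hdeg E v) \<le> \<zeta>"
  proof (cases "\<Delta> = 0")
    case True then show ?thesis using zpos by (simp add: a_def)
  next
    case False
    have "a * real (hdeg E v) \<le> a * real \<Delta>" using deg v a0 by (simp add: mult_left_mono)
    also have "\<dots> = \<zeta>" using False by (simp add: a_def)
    finally show ?thesis .
  qed
  have "\<bar>ln (?F (?F x) v) - ln (?F (?F y) v)\<bar> \<le> a * (real (hdeg E v) * K)"
    unfolding eq using s a0 by (simp add: mult_left_mono)
  also have "\<dots> = (a * real (hdeg E v)) * K" by simp
  also have "\<dots> \<le> \<zeta> * K" using aD K0 by (simp add: mult_right_mono)
  also have "\<dots> = \<zeta> * c ^ (k - 1) * real (k - 1) * exp (-1) * L" by (simp add: K_def)
  finally show ?thesis .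
qed


lemma fix_exists:
  assumes q1: "\<zeta> * c ^ (k - 1) * real (k - 1) * exp (-1) < 1"
  shows "\<exists>x. x \<in> posvec V \<and> Fmap V E c \<zeta> \<Delta> x = x"
proof -
  let ?F = "Fmap V E c \<zeta> \<Delta>"
  define q where "q = \<zeta> * c ^ (k - 1) * real (k - 1) * exp (-1)"
  have q0: "0 \<le> q" using zpos cpos k2 by (simp add: q_def)
  define \<Phi> where "\<Phi> a = restrict (\<lambda>v. ln (?F (\<lambda>u. exp (a u)) v)) V" for a :: "'a \<Rightarrow> real"
  have expPhi: "exp (\<Phi> a u) = ?F (\<lambda>u. exp (a u)) u" if "u \<in> V" for a u
    using that Fpos by (simp add: \<Phi>_def)
  have Phi2: "\<Phi> (\<Phi> a) v = ln (?F (?F (\<lambda>u. exp (a u))) v)" if "v \<in> V" for a v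
  proof -
    have "?F (\<lambda>u. exp (\<Phi> a u)) = ?F (?F (\<lambda>u. exp (a u)))"
      by (rule Fcong) (simp add: expPhi)
    thus ?thesis using that by (simp add: \<Phi>_def)
  qed
  interpret Fs: Metric_space "Met_TC.fspace V :: ('a \<Rightarrow> real) set" "Met_TC.fdist V"
    by (rule Met_TC.Metric_space_funspace)
  have mc: "Fs.mcomplete"
    by (metis Met_TC.mcomplete_funspace complete_UNIV mcomplete_iff_complete mcomplete_of_def
         Met_TC.mdist_Self mdist_funspace Met_TC.mspace_Self mspace_funspace)
  have inF: "restrict g V \<in> Met_TC.fspace V" for g :: "'a \<Rightarrow> real"
    unfolding Met_TC.fspace_def using finV by (auto intro: finite_imp_bounded)
  have PhiF: "\<Phi> a \<in> Met_TC.fspace V" for a unfolding \<Phi>_def by (rule inF)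
  have nonempty: "Met_TC.fspace V \<noteq> ({} :: ('a \<Rightarrow> real) set)" using inF[of "\<lambda>_. 0"] by (metis empty_iff)
  have fim: "\<Phi> \<circ> \<Phi> \<in> Met_TC.fspace V \<rightarrow> Met_TC.fspace V" using PhiF by (simp add: Pi_iff)
  have con: "Met_TC.fdist V ((\<Phi> \<circ> \<Phi>) a) ((\<Phi> \<circ> \<Phi>) b) \<le> q * Met_TC.fdist V a b"
    if a: "a \<in> Met_TC.fspace V" and b: "b \<in> Met_TC.fspace V" for a b
  proof (cases "V = {}")
    case True then show ?thesis by (simp add: Met_TC.fdist_def)
  next
    case False
    have fd0: "0 \<le> Met_TC.fdist V a b" by (rule Fs.nonneg)
    have hab: "\<forall>u\<in>V. dist (a u) (b u) \<le> Met_TC.fdist V a b"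
      using Met_TC.funspace_mdist_le[OF a b False, of "Met_TC.fdist V a b"] by simp
    have "\<forall>v\<in>V. dist ((\<Phi> \<circ> \<Phi>) a v) ((\<Phi> \<circ> \<Phi>) b v) \<le> q * Met_TC.fdist V a b"
    proof
      fix v assume v: "v \<in> V"
      have "\<bar>ln (?F (?F (\<lambda>u. exp (a u))) v) - ln (?F (?F (\<lambda>u. exp (b u))) v)\<bar> \<le> q * Met_TC.fdist V a b"
        unfolding q_def
        by (rule main_vertex[OF _ _ _ fd0 v]) (use hab in \<open>auto simp: dist_real_def\<close>)
      then show "dist ((\<Phi> \<circ> \<Phi>) a v) ((\<Phi> \<circ> \<Phi>) b v) \<le> q * Met_TC.fdist V a b"
        by (simp only: o_apply Phi2[OF v] dist_real_def)
    qed
    then show ?thesis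
      using Met_TC.funspace_mdist_le[OF PhiF PhiF False] by (simp add: o_def)
  qed
  obtain a where aF: "a \<in> Met_TC.fspace V" and afix: "(\<Phi> \<circ> \<Phi>) a = a"
    using Fs.Banach_fixedpoint_thm[OF mc nonempty fim q1[folded q_def] con] by blast
  have fa: "(\<Phi> \<circ> \<Phi>) (\<Phi> a) = \<Phi> a" using afix by (metis comp_apply)
  have Pa: "\<Phi> a = a"
    by (rule Fs.contraction_imp_unique_fixpoint[OF fa afix fim q1[folded q_def] con PhiF aF])
  define x where "x = restrict (\<lambda>u. exp (a u)) V"
  have xpos: "x \<in> posvec V" by (simp add: x_def posvec_def)
  have "?F x = x"
  proof (rule extensionalityI)
    show "?F x \<in> extensional V" by (simp add: Fmap_Ssum)
    show "x \<in> extensional V" by (simp add: x_def)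
    fix v assume v: "v \<in> V"
    have "?F x = ?F (\<lambda>u. exp (a u))" by (rule Fcong) (simp add: x_def)
    hence "?F x v = exp (\<Phi> a v)" using expPhi[OF v] by simp
    also have "\<dots> = x v" using Pa v by (simp add: x_def)
    finally show "?F x v = x v" .
  qed
  thus ?thesis using xpos by blast
qed

end


lemma supnorm_ge: "finite V \<Longrightarrow> v \<in> V \<Longrightarrow> \<bar>f v\<bar> \<le> supnorm V f"
  unfolding supnorm_def by (rule Max_ge) auto

lemma supnorm_nonneg: "finite V \<Longrightarrow> 0 \<le> supnorm V f"
  unfolding supnorm_def by (rule Max_ge) auto

lemma supnorm_le: "finite V \<Longrightarrow> 0 \<le> B \<Longrightarrow> (\<And>v. v \<in> V \<Longrightarrow> \<bar>f v\<bar> \<le> B) \<Longrightarrow> supnorm V f \<le> B"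
  unfolding supnorm_def by (subst Max_le_iff) auto

theorem mainTheorem12:
  fixes k \<Delta> :: nat and c \<zeta> :: real and V :: "'a set" and E :: "'a set set"
  assumes "k \<ge> 2" and "c > 0" and "0 < \<zeta>" and "\<zeta> \<le> 1"
    and "\<zeta> * real (k - 1) * c ^ (k - 1) < exp 1"
    and "uniform_hypergraph k V E"
    and "\<forall>v\<in>V. hdeg E v \<le> \<Delta>"
  shows "(\<forall>x\<in>posvec V. \<forall>y\<in>posvec V.
           supnorm V (\<lambda>v. ln ((Fmap V E c \<zeta> \<Delta> \<circ> Fmap V E c \<zeta> \<Delta>) x v)
                        - ln ((Fmap V E c \<zeta> \<Delta> \<circ> Fmap V E c \<zeta> \<Delta>) y v))
           \<le> (1 - (1 - \<zeta> * c ^ (k - 1) * real (k - 1) * exp (-1)))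
              * supnorm V (\<lambda>v. ln (x v) - ln (y v)))
         \<and> (\<exists>!x. x \<in> posvec V \<and> Fmap V E c \<zeta> \<Delta> x = x)"
proof -
  note A = assms(1,2,3,6,7)
  let ?F = "Fmap V E c \<zeta> \<Delta>"
  define q where "q = \<zeta> * c ^ (k - 1) * real (k - 1) * exp (-1)"
  have finV: "finite V" using assms(6) by (simp add: uniform_hypergraph_def)
  have q0: "0 \<le> q" using assms(2,3) by (simp add: q_def)
  have q1: "q < 1"
  proof -
    have "q = (\<zeta> * real (k - 1) * c ^ (k - 1)) / exp 1"
      by (simp add: q_def exp_minus field_simps)
    thus ?thesis using assms(5) by simp
  qed
  have key: "\<forall>v\<in>V. \<bar>ln (?F (?F x) v) - ln (?F (?F y) v)\<bar> \<le> q * supnorm V (\<lambda>v. ln (x v) - ln (y v))"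
    if x: "x \<in> posvec V" and y: "y \<in> posvec V" for x y
  proof
    fix v assume v: "v \<in> V"
    show "\<bar>ln (?F (?F x) v) - ln (?F (?F y) v)\<bar> \<le> q * supnorm V (\<lambda>v. ln (x v) - ln (y v))"
      unfolding q_def
      by (rule main_vertex[OF A _ _ _ supnorm_nonneg[OF finV] v])
         (use x y supnorm_ge[OF finV, of _ "\<lambda>v. ln (x v) - ln (y v)"] in \<open>auto simp: posvec_def\<close>)
  qed
  have part1: "\<forall>x\<in>posvec V. \<forall>y\<in>posvec V.
           supnorm V (\<lambda>v. ln ((?F \<circ> ?F) x v) - ln ((?F \<circ> ?F) y v))
           \<le> (1 - (1 - q)) * supnorm V (\<lambda>v. ln (x v) - ln (y v))"
  proof (intro ballI)
    fix x y assume x: "x \<in> posvec V" and y: "y \<in> posvec V"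
    show "supnorm V (\<lambda>v. ln ((?F \<circ> ?F) x v) - ln ((?F \<circ> ?F) y v))
           \<le> (1 - (1 - q)) * supnorm V (\<lambda>v. ln (x v) - ln (y v))"
      using key[OF x y] q0 supnorm_nonneg[OF finV]
      by (intro supnorm_le[OF finV]) auto
  qed
  have uniq: "x = y" if x: "x \<in> posvec V" "?F x = x" and y: "y \<in> posvec V" "?F y = y" for x y
  proof -
    define L where "L = supnorm V (\<lambda>v. ln (x v) - ln (y v))"
    have "L \<le> q * L"
      unfolding L_def
      using key[OF x(1) y(1)] x(2) y(2) q0 supnorm_nonneg[OF finV]
      by (intro supnorm_le[OF finV]) auto
    moreover have "0 \<le> L" unfolding L_def by (rule supnorm_nonneg[OF finV])
    ultimately have L0: "L = 0" using q1 q0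
      by (metis mult_le_cancel_right1 nle_le not_less)
    show ?thesis
    proof (rule extensionalityI)
      show "x \<in> extensional V" "y \<in> extensional V" using x y by (auto simp: posvec_def)
      fix v assume v: "v \<in> V"
      have "\<bar>ln (x v) - ln (y v)\<bar> \<le> 0"
        using supnorm_ge[OF finV v, of "\<lambda>v. ln (x v) - ln (y v)"] L0 by (simp add: L_def)
      hence "ln (x v) = ln (y v)" by simp
      thus "x v = y v" using x y v by (auto simp: posvec_def)
    qed
  qed
  have ex: "\<exists>x. x \<in> posvec V \<and> ?F x = x"
    by (rule fix_exists[OF A]) (use q1 in \<open>simp add: q_def\<close>)
  show ?thesis
    using part1 ex uniq unfolding q_def by blast
qed

end
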